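(* Let $\Theta$ be a finite set, $b$ a belief function on $\Theta$ with mass function $m_b$, and $\emptyset \subsetneq A \subseteq \Theta$. The mass vector of the $L_2$ conditional belief function of $b$ with respect to $A$ in the mass space, namely the vector with entries $m_b(B) + \frac{1-b(A)}{2^{|A|}-1}$ for $\emptyset\subsetneq B\subseteq A$ and $0$ elsewhere, is the center of mass $\frac{1}{2^{|A|}-1}\sum_{\emptyset\subsetneq B\subseteq A}\vec{m}[b]|_{L_1}^B A$ of the simplex $\mathcal{M}_{L_1,A}[b]=Cl(\vec{m}[b]|_{L_1}^B A,\ \emptyset\subsetneq B\subseteq A)$ of $L_1$ conditional belief functions of $b$ with respect to $A$ in the mass space, where the vertex $\vec{m}[b]|_{L_1}^B A$ is the mass vector $\vec{m}_a\in\mathcal{M}_A$ with $m_a(B)=m_b(B)+1-b(A)$ and $m_a(X)=m_b(X)$ for all $\emptyset\subsetneq X\subsetneq A$, $X\neq B$.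
   Context: A mass function on a finite set $\Theta$ is $m:2^\Theta\to[0,1]$ with $m(\emptyset)=0$ and $\sum_{A\subseteq\Theta} m(A)=1$; the associated belief function is $b(A)=\sum_{B\subseteq A} m_b(B)$. The mass vector of $b$ is $\vec{m}_b=[m_b(B)]_{\emptyset\subsetneq B\subseteq\Theta}\in\mathbb{R}^{2^{|\Theta|}-1}$. For $\emptyset\subsetneq A\subseteq\Theta$, $\mathcal{M}_A$ is the set of mass vectors of belief functions all of whose focal elements are subsets of $A$. The $L_2$ conditional belief function is the minimizer of $\|\vec{m}_b-\vec{m}_a\|_{L_2}$ (Euclidean distance of mass vectors) over $\vec{m}_a\in\mathcal{M}_A$, and the $L_1$ conditional belief functions are the minimizers of $\sum_{\emptyset\subsetneq B\subseteq\Theta}|m_b(B)-m_a(B)|$ over $\vec{m}_a\in\mathcal{M}_A$. $Cl(\cdot)$ denotes convex hull. *)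

theory Defs
  imports "HOL-Analysis.Analysis"
begin

text \<open>Mass functions / mass vectors on a finite frame Theta are represented as
  functions of type 'a set => real; a mass vector is indexed by the nonempty subsets
  of Theta and we use the convention that it is 0 at every other set.\<close>

definition mass_function :: "'a set \<Rightarrow> ('a set \<Rightarrow> real) \<Rightarrow> bool" where
  "mass_function \<Theta> m \<longleftrightarrow>
     m {} = 0 \<and> (\<forall>B. 0 \<le> m B) \<and> (\<forall>B. \<not> B \<subseteq> \<Theta> \<longrightarrow> m B = 0)
     \<and> (\<Sum>B\<in>Pow \<Theta>. m B) = 1"

definition belief :: "('a set \<Rightarrow> real) \<Rightarrow> 'a set \<Rightarrow> real" where
  "belief m A = (\<Sum>B\<in>Pow A. m B)"

definition mass_space_A :: "'a set \<Rightarrow> 'a set \<Rightarrow> ('a set \<Rightarrow> real) set" where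
  "mass_space_A \<Theta> A = {v. mass_function \<Theta> v \<and> (\<forall>X. \<not> X \<subseteq> A \<longrightarrow> v X = 0)}"

definition L1_vertex ::
  "'a set \<Rightarrow> ('a set \<Rightarrow> real) \<Rightarrow> 'a set \<Rightarrow> 'a set \<Rightarrow> ('a set \<Rightarrow> real)" where
  "L1_vertex \<Theta> m A B = (THE v. v \<in> mass_space_A \<Theta> A \<and>
      v B = m B + 1 - belief m A \<and>
      (\<forall>X. X \<noteq> {} \<and> X \<subset> A \<and> X \<noteq> B \<longrightarrow> v X = m X))"

end

theory Submission
  imports Defs
begin

lemma vertex_eq:
  fixes \<Theta> A :: "'a set" and m :: "'a set \<Rightarrow> real"
  assumes fin: "finite \<Theta>" and mf: "mass_function \<Theta> m"
    and "A \<noteq> {}" and AT: "A \<subseteq> \<Theta>" and B: "B \<in> Pow A - {{}}"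
  shows "L1_vertex \<Theta> m A B = (\<lambda>X. if X \<noteq> {} \<and> X \<subseteq> A
          then m X + (if X = B then 1 - belief m A else 0) else 0)"
    (is "_ = ?w")
proof -
  have m0: "m {} = 0" and mnn: "\<And>X. 0 \<le> m X" and mout: "\<And>X. \<not> X \<subseteq> \<Theta> \<Longrightarrow> m X = 0"
    and msum: "(\<Sum>X\<in>Pow \<Theta>. m X) = 1" using mf unfolding mass_function_def by auto
  have finA: "finite A" using fin AT finite_subset by blast
  have PA: "Pow A \<subseteq> Pow \<Theta>" using AT by auto
  have belle: "belief m A \<le> 1"
    unfolding belief_def using sum_mono2[OF _ PA, of m] fin mnn msum by auto
  have BA: "B \<subseteq> A" "B \<noteq> {}" using B by auto
  have sumPA: "\<And>v. (\<forall>X. \<not> X \<subseteq> A \<longrightarrow> v X = 0) \<Longrightarrow> (\<Sum>X\<in>Pow \<Theta>. v X) = (\<Sum>X\<in>Pow A. v X)"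
    by (rule sum.mono_neutral_right) (use fin PA in auto)
  have wsum: "(\<Sum>X\<in>Pow A. ?w X) = 1"
  proof -
    have "(\<Sum>X\<in>Pow A. ?w X) = (\<Sum>X\<in>Pow A. m X + (if X = B then 1 - belief m A else 0))"
      by (rule sum.cong) (use m0 BA in auto)
    also have "\<dots> = belief m A + (1 - belief m A)"
      unfolding belief_def sum.distrib using BA finA by (simp add: sum.delta)
    finally show ?thesis by simp
  qed
  have wmem: "?w \<in> mass_space_A \<Theta> A"
    unfolding mass_space_A_def mass_function_def
    using sumPA[of ?w] wsum mnn belle AT by auto
  show ?thesis unfolding L1_vertex_def
  proof (rule the_equality)
    show "?w \<in> mass_space_A \<Theta> A \<and> ?w B = m B + 1 - belief m A \<and>
      (\<forall>X. X \<noteq> {} \<and> X \<subset> A \<and> X \<noteq> B \<longrightarrow> ?w X = m X)"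
      using wmem BA by auto
  next
    fix v assume v: "v \<in> mass_space_A \<Theta> A \<and> v B = m B + 1 - belief m A \<and>
      (\<forall>X. X \<noteq> {} \<and> X \<subset> A \<and> X \<noteq> B \<longrightarrow> v X = m X)"
    have vout: "\<forall>X. \<not> X \<subseteq> A \<longrightarrow> v X = 0" and v0: "v {} = 0"
      and vs: "(\<Sum>X\<in>Pow \<Theta>. v X) = 1"
      using v unfolding mass_space_A_def mass_function_def by auto
    have vsA: "(\<Sum>X\<in>Pow A. v X) = 1" using vs sumPA[OF vout] by simp
    have agree: "\<And>X. X \<noteq> A \<Longrightarrow> v X = ?w X"
      using v vout v0 by auto
    have "v A = ?w A"
    proof -
      have "(\<Sum>X\<in>Pow A. v X) = v A + (\<Sum>X\<in>Pow A - {A}. v X)"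
        by (rule sum.remove) (use finA in auto)
      moreover have "(\<Sum>X\<in>Pow A. ?w X) = ?w A + (\<Sum>X\<in>Pow A - {A}. ?w X)"
        by (rule sum.remove) (use finA in auto)
      moreover have "(\<Sum>X\<in>Pow A - {A}. v X) = (\<Sum>X\<in>Pow A - {A}. ?w X)"
        by (rule sum.cong) (use agree in auto)
      ultimately show ?thesis using vsA wsum by linarith
    qed
    note vA = this
    show "v = ?w"
    proof (rule ext)
      fix X show "v X = ?w X"
      proof (cases "X = A")
        case True then show ?thesis using vA by simp
      next
        case False then show ?thesis by (rule agree)
      qed
    qed
  qed
qed

theorem theorem4:
  fixes \<Theta> A :: "'a set" and m :: "'a set \<Rightarrow> real"
  assumes "finite \<Theta>" and "mass_function \<Theta> m"
    and "A \<noteq> {}" and "A \<subseteq> \<Theta>"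
  shows "(\<lambda>X. if X \<noteq> {} \<and> X \<subseteq> A
                then m X + (1 - belief m A) / (2 ^ card A - 1) else 0)
         = (\<lambda>X. (1 / (2 ^ card A - 1)) * (\<Sum>B\<in>Pow A - {{}}. L1_vertex \<Theta> m A B X))"
proof
  fix X
  have finA: "finite A" using assms finite_subset by blast
  have cardA: "card A \<ge> 1" using finA assms(3) by (simp add: Suc_le_eq card_gt_0_iff)
  have "(2::real) ^ card A \<ge> 2 ^ 1" by (rule power_increasing) (use cardA in auto)
  hence Npos: "(2::real) ^ card A - 1 > 0" by simp
  have cP: "real (card (Pow A - {{}})) = 2 ^ card A - 1"
    using finA by (simp add: card_Diff_singleton card_Pow of_nat_diff)
  have S: "(\<Sum>B\<in>Pow A - {{}}. L1_vertex \<Theta> m A B X) =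
     (\<Sum>B\<in>Pow A - {{}}. (if X \<noteq> {} \<and> X \<subseteq> A
          then m X + (if X = B then 1 - belief m A else 0) else 0))"
    by (rule sum.cong) (use vertex_eq[OF assms] in auto)
  show "(if X \<noteq> {} \<and> X \<subseteq> A then m X + (1 - belief m A) / (2 ^ card A - 1) else 0)
      = (1 / (2 ^ card A - 1)) * (\<Sum>B\<in>Pow A - {{}}. L1_vertex \<Theta> m A B X)"
  proof (cases "X \<noteq> {} \<and> X \<subseteq> A")
    case True
    have "(\<Sum>B\<in>Pow A - {{}}. L1_vertex \<Theta> m A B X) =
        (\<Sum>B\<in>Pow A - {{}}. m X + (if X = B then 1 - belief m A else 0))"
      using S True by simp
    also have "\<dots> = (2 ^ card A - 1) * m X + (1 - belief m A)"
      using True finA cP by (simp add: sum.distrib sum.delta')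
    finally show ?thesis using True Npos by (simp add: field_simps)
  next
    case False
    have "(\<Sum>B\<in>Pow A - {{}}. L1_vertex \<Theta> m A B X) = 0"
      unfolding S by (rule sum.neutral) (use False in auto)
    then show ?thesis using False by auto
  qed
qed

end
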